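(* Let $p\geq1$, $\mu>0$, and let $g:\mathbb{R}^n\to\mathbb{R}\cup\{+\infty\}$ be convex. Let $\lambda^{\ast}$ be the optimal solution of $$\min_{\lambda\in\mathbb{R}^n}\Big\{g(\lambda)+\frac{\mu}{1+\frac1p}\lVert\lambda\rVert^{1+\frac1p}\Big\},$$ and suppose $\lambda^{\ast}=0$. Let $\lambda^k\in\mathbb{R}^n$ with $\lVert\lambda^k\rVert>0$, set $t^k=\lVert\lambda^k\rVert^{\frac1p-1}$, and let $$\lambda^{k+1}=\arg\min_{\lambda\in\mathbb{R}^n}\Big\{g(\lambda)+\frac{\mu}{2}t^k\lVert\lambda\rVert^2\Big\}.$$ Then $\lambda^{k+1}=\lambda^{\ast}$ (i.e. $\lambda^{k+1}=0$).
   Context: $\lVert\cdot\rVert$ is the Euclidean norm. The minimizers above are assumed to exist. This is one step of the fixed point iteration: given $\lambda^k$, set $t^k=\lVert\lambda^k\rVert^{1/p-1}$ if $\lambda^k\neq0$ and $t^k=0$ otherwise, and $\lambda^{k+1}=\arg\min_\lambda\{g(\lambda)+\frac{\mu}{2}t^k\lVert\lambda\rVert^2\}$. *)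

theory Defs
  imports "HOL-Analysis.Analysis"
begin

text \<open>Extended-valued convex function g : R^n -> R \<union> {+\<infinity>}, modelled as an
  ereal-valued function that never takes the value -\<infinity>, satisfying the
  convexity inequality with extended arithmetic (0 * \<infinity> = 0).\<close>
definition ext_convex :: "('a::real_vector \<Rightarrow> ereal) \<Rightarrow> bool" where
  "ext_convex g \<longleftrightarrow> (\<forall>x. g x \<noteq> -\<infinity>) \<and>
     (\<forall>x y (t::real). 0 \<le> t \<and> t \<le> 1 \<longrightarrow>
        g ((1 - t) *\<^sub>R x + t *\<^sub>R y) \<le> ereal (1 - t) * g x + ereal t * g y)"

definition is_minimizer :: "('a \<Rightarrow> ereal) \<Rightarrow> 'a \<Rightarrow> bool" where
  "is_minimizer F x \<longleftrightarrow> (\<forall>y. F x \<le> F y)"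

end

theory Submission
  imports Defs
begin

lemma key_ineq:
  fixes g :: "real ^ 'n \<Rightarrow> ereal" and p \<mu> :: real
  assumes p: "p \<ge> 1" and mu: "\<mu> > 0"
    and conv: "ext_convex g"
    and proper: "\<exists>x. g x < \<infinity>"
    and opt: "is_minimizer
                (\<lambda>x. g x + ereal (\<mu> / (1 + 1 / p) * norm x powr (1 + 1 / p))) 0"
  shows "g 0 \<noteq> \<infinity> \<and> g 0 \<noteq> -\<infinity> \<and> (\<forall>y. g 0 \<le> g y)"
proof -
  have ninf: "\<And>x. g x \<noteq> -\<infinity>" using conv unfolding ext_convex_def by blast
  have cvx: "\<And>x y t. 0 \<le> t \<Longrightarrow> t \<le> 1 \<Longrightarrow>
        g ((1 - t) *\<^sub>R x + t *\<^sub>R y) \<le> ereal (1 - t) * g x + ereal t * g y"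
    using conv unfolding ext_convex_def by blast
  define q where "q = 1 + 1 / p"
  have q: "q > 1" using p unfolding q_def by simp
  have op: "\<And>y. g 0 \<le> g y + ereal (\<mu> / q * norm y powr q)"
  proof -
    fix y
    have "g 0 + ereal (\<mu> / q * norm (0::real^'n) powr q) \<le> g y + ereal (\<mu> / q * norm y powr q)"
      using opt unfolding is_minimizer_def q_def by blast
    thus "g 0 \<le> g y + ereal (\<mu> / q * norm y powr q)" by (simp add: zero_ereal_def[symmetric])
  qed
  obtain x where x: "g x < \<infinity>" using proper by blast
  have "g 0 \<le> g x + ereal (\<mu> / q * norm x powr q)" by (rule op)
  also have "\<dots> < \<infinity>" using x by simp
  finally have g0: "g 0 \<noteq> \<infinity>" by simp
  then obtain G0 where G0: "g 0 = ereal G0" using ninf[of 0] by (cases "g 0") auto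
  have "g 0 \<le> g y" for y
  proof (rule ccontr)
    assume "\<not> g 0 \<le> g y"
    hence lt: "g y < g 0" by simp
    then obtain Gy where Gy: "g y = ereal Gy" using ninf[of y] G0 by (cases "g y") auto
    define d where "d = G0 - Gy"
    have d: "d > 0" using lt G0 Gy d_def by simp
    define c where "c = \<mu> / q * norm y powr q"
    have c: "c \<ge> 0" using mu q unfolding c_def by simp
    define s where "s = min 1 ((d / (c + 1)) powr p)"
    have s0: "s > 0" using d c unfolding s_def by simp
    have s1: "s \<le> 1" unfolding s_def by simp
    have "s powr (1/p) \<le> ((d / (c + 1)) powr p) powr (1/p)"
      unfolding s_def using s0 p by (intro powr_mono2) (auto simp: s_def)
    also have "\<dots> = d / (c+1)" using p d c by (simp add: powr_powr)
    finally have sp: "s powr (1/p) \<le> d / (c+1)" .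
    have "c * s powr (1/p) \<le> c * (d/(c+1))" using sp c by (rule mult_left_mono)
    also have "\<dots> < d" using c d by (simp add: field_simps)
    finally have small: "c * s powr (1/p) < d" .
    have cv: "g (s *\<^sub>R y) \<le> ereal ((1 - s) * G0 + s * Gy)"
      using cvx[of s 0 y] s0 s1 G0 Gy by simp
    have "(s * norm y) powr q = s powr q * norm y powr q"
      using s0 by (simp add: powr_mult)
    moreover have "s powr q = s * s powr (1/p)" using s0 unfolding q_def by (simp add: powr_add)
    ultimately have e: "\<mu> / q * norm (s *\<^sub>R y) powr q = s * (c * s powr (1/p))"
      using s0 unfolding c_def by simp
    have "ereal G0 \<le> g (s *\<^sub>R y) + ereal (s * (c * s powr (1/p)))"
      using op[of "s *\<^sub>R y"] G0 e by simp
    also have "\<dots> \<le> ereal ((1 - s) * G0 + s * Gy) + ereal (s * (c * s powr (1/p)))"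
      using cv by (rule add_right_mono)
    finally have "G0 \<le> (1 - s) * G0 + s * Gy + s * (c * s powr (1/p))" by simp
    hence "s * d \<le> s * (c * s powr (1/p))" unfolding d_def by (simp add: algebra_simps)
    hence "d \<le> c * s powr (1/p)" using s0 by simp
    thus False using small by simp
  qed
  thus ?thesis using g0 ninf by blast
qed

theorem theorem4p1:
  fixes g :: "real ^ 'n \<Rightarrow> ereal"
    and p \<mu> :: real
    and lk lk1 :: "real ^ 'n"
  assumes p: "p \<ge> 1"
    and mu: "\<mu> > 0"
    and conv: "ext_convex g"
    and proper: "\<exists>x. g x < \<infinity>"
    and opt: "is_minimizer
                (\<lambda>x. g x + ereal (\<mu> / (1 + 1 / p) * norm x powr (1 + 1 / p))) 0"
    and lk_pos: "norm lk > 0"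
    and step: "is_minimizer
                (\<lambda>x. g x + ereal (\<mu> / 2 * (norm lk powr (1 / p - 1)) * (norm x)\<^sup>2)) lk1"
  shows "lk1 = 0"
proof (rule ccontr)
  assume ne: "lk1 \<noteq> 0"
  have K: "g 0 \<noteq> \<infinity> \<and> g 0 \<noteq> -\<infinity> \<and> (\<forall>y. g 0 \<le> g y)"
    using key_ineq[OF p mu conv proper opt] .
  then obtain G0 where G0: "g 0 = ereal G0" by (cases "g 0") auto
  define h where "h = \<mu> / 2 * (norm lk powr (1 / p - 1)) * (norm lk1)\<^sup>2"
  have h: "h > 0" using mu lk_pos ne unfolding h_def by simp
  have "g lk1 + ereal h \<le> g 0 + ereal (\<mu> / 2 * (norm lk powr (1 / p - 1)) * (norm (0::real^'n))\<^sup>2)"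
    using step unfolding is_minimizer_def h_def by blast
  hence le: "g lk1 + ereal h \<le> ereal G0" using G0 by simp
  have "ereal G0 \<le> g lk1" using K G0 by metis
  then obtain G1 where G1: "g lk1 = ereal G1" using le by (cases "g lk1") auto
  show False using le G1 h \<open>ereal G0 \<le> g lk1\<close> by simp
qed

end
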